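(* Let $\mathscr{P}=\{X_t\}_{t\ge1}$ be a stationary ergodic stochastic process over a finite alphabet $\Sigma$, and let $Q$ be its set of causal states (excluding the class of zero-probability sequences). For $q,q'\in Q$ put $\pi_{q,q'}=\sum_{\sigma\in\Sigma:\,q\sigma=q'}\phi_q(\sigma)$. Then for every $q'\in Q$ and every $d\in\mathbb{N}^+$, $$p_d(q')=\sum_{q\in Q}\pi_{q,q'}\,p_{d-1}(q).$$ Furthermore, $\pi_{q,q'}=0$ whenever $q$ is persistent and $q'$ is transient.
   Context: For $x=\sigma_1\cdots\sigma_n\in\Sigma^\star$ (finite sequences, $\lambda$ the empty sequence) write $Pr(x)=Pr(X_1\cdots X_n=\sigma_1\cdots\sigma_n)$, with $Pr(\lambda)=1$. For $x$ with $Pr(x)>0$, $\mu_x$ is the probability measure on $\Sigma^\omega$ (with the $\sigma$-field generated by cylinders $y\Sigma^\omega$) determined by $\mu_x(y\Sigma^\omega)=Pr(xy)/Pr(x)$. Sequences $x,y$ are equivalent ($x\sim y$) iff $Pr(x)=Pr(y)=0$ or $\mu_x=\mu_y$; this equivalence is right-invariant ($x\sim y\Rightarrow xz\sim yz$). The equivalence classes $[x]$ with $Pr(x)>0$ are the causal states; $\mu_{[x]}:=\mu_x$. The symbolic derivative is $\phi_q(\sigma)=\mu_q(\sigma\Sigma^\omega)$. The notation $q\sigma=q'$ means $[x\sigma]=q'$ for all $x\in q$ (well-defined when $\phi_q(\sigma)>0$). For $q\in Q$ and $d\in\mathbb{N}$, $p_d(q)=\sum_{x\in\Sigma^d:\,[x]=q}Pr(x)$.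 A causal state $q$ is persistent if $\liminf_{d\to\infty}p_d(q)>0$ and transient otherwise. *)

theory Defs
  imports "HOL-Probability.Probability"
begin

text \<open>A process is given by a probability space M and random variables
  X t : M \<rightarrow> \<Sigma> (t = 0,1,2,...; X 0 plays the role of X_1).\<close>

definition law :: "'w measure \<Rightarrow> (nat \<Rightarrow> 'w \<Rightarrow> 'a) \<Rightarrow> (nat \<Rightarrow> 'a) measure" where
  "law M X = distr M (PiM UNIV (\<lambda>_. count_space UNIV)) (\<lambda>\<omega> t. X t \<omega>)"

definition shift :: "(nat \<Rightarrow> 'a) \<Rightarrow> (nat \<Rightarrow> 'a)" where
  "shift f = (\<lambda>t. f (Suc t))"

definition stationary_ergodic :: "'w measure \<Rightarrow> (nat \<Rightarrow> 'w \<Rightarrow> 'a) \<Rightarrow> bool" where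
  "stationary_ergodic M X \<longleftrightarrow>
     prob_space M \<and>
     (\<forall>t. X t \<in> measurable M (count_space UNIV)) \<and>
     distr (law M X) (PiM UNIV (\<lambda>_. count_space UNIV)) shift = law M X \<and>
     (\<forall>A \<in> sets (law M X). shift -` A \<inter> space (law M X) = A \<longrightarrow>
         emeasure (law M X) A = 0 \<or> emeasure (law M X) A = 1)"

definition Pr :: "'w measure \<Rightarrow> (nat \<Rightarrow> 'w \<Rightarrow> 'a) \<Rightarrow> 'a list \<Rightarrow> real" where
  "Pr M X x = measure M {\<omega> \<in> space M. \<forall>i < length x. X i \<omega> = x ! i}"

text \<open>mu_x(y Sigma^omega) = Pr(xy)/Pr(x); mu_x is determined by these cylinder values.\<close>
definition mu_cyl :: "'w measure \<Rightarrow> (nat \<Rightarrow> 'w \<Rightarrow> 'a) \<Rightarrow> 'a list \<Rightarrow> 'a list \<Rightarrow> real" where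
  "mu_cyl M X x y = Pr M X (x @ y) / Pr M X x"

definition cequiv :: "'w measure \<Rightarrow> (nat \<Rightarrow> 'w \<Rightarrow> 'a) \<Rightarrow> 'a list \<Rightarrow> 'a list \<Rightarrow> bool" where
  "cequiv M X x y \<longleftrightarrow> (Pr M X x = 0 \<and> Pr M X y = 0) \<or>
     (Pr M X x > 0 \<and> Pr M X y > 0 \<and> mu_cyl M X x = mu_cyl M X y)"

definition cls :: "'w measure \<Rightarrow> (nat \<Rightarrow> 'w \<Rightarrow> 'a) \<Rightarrow> 'a list \<Rightarrow> 'a list set" where
  "cls M X x = {y. cequiv M X x y}"

definition causal_states :: "'w measure \<Rightarrow> (nat \<Rightarrow> 'w \<Rightarrow> 'a) \<Rightarrow> 'a list set set" where
  "causal_states M X = {cls M X x | x. Pr M X x > 0}"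

definition sym_deriv :: "'w measure \<Rightarrow> (nat \<Rightarrow> 'w \<Rightarrow> 'a) \<Rightarrow> 'a list set \<Rightarrow> 'a \<Rightarrow> real" where
  "sym_deriv M X q \<sigma> = mu_cyl M X (SOME x. x \<in> q) [\<sigma>]"

text \<open>q sigma = q' : [x sigma] = q' for all x in q.\<close>
definition next_state :: "'w measure \<Rightarrow> (nat \<Rightarrow> 'w \<Rightarrow> 'a) \<Rightarrow> 'a list set \<Rightarrow> 'a \<Rightarrow> 'a list set \<Rightarrow> bool" where
  "next_state M X q \<sigma> q' \<longleftrightarrow> (\<forall>x \<in> q. cls M X (x @ [\<sigma>]) = q')"

definition trans_prob :: "'w measure \<Rightarrow> (nat \<Rightarrow> 'w \<Rightarrow> 'a::finite) \<Rightarrow> 'a list set \<Rightarrow> 'a list set \<Rightarrow> real" where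
  "trans_prob M X q q' = (\<Sum>\<sigma> \<in> {\<sigma>. next_state M X q \<sigma> q'}. sym_deriv M X q \<sigma>)"

definition pd :: "'w measure \<Rightarrow> (nat \<Rightarrow> 'w \<Rightarrow> 'a::finite) \<Rightarrow> nat \<Rightarrow> 'a list set \<Rightarrow> real" where
  "pd M X d q = (\<Sum>x \<in> {x. length x = d \<and> cls M X x = q}. Pr M X x)"

definition persistent :: "'w measure \<Rightarrow> (nat \<Rightarrow> 'w \<Rightarrow> 'a::finite) \<Rightarrow> 'a list set \<Rightarrow> bool" where
  "persistent M X q \<longleftrightarrow> liminf (\<lambda>d. ereal (pd M X d q)) > 0"

definition transient :: "'w measure \<Rightarrow> (nat \<Rightarrow> 'w \<Rightarrow> 'a::finite) \<Rightarrow> 'a list set \<Rightarrow> bool" where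
  "transient M X q \<longleftrightarrow> \<not> persistent M X q"

end

theory Submission
  imports Defs
begin

lemma Pr_nonneg: "Pr M X x \<ge> 0"
  unfolding Pr_def by simp

lemma Pr_snoc_le:
  assumes "prob_space M" "\<And>t. X t \<in> measurable M (count_space UNIV)"
  shows "Pr M X (x @ [s]) \<le> Pr M X x"
proof -
  interpret prob_space M by fact
  have meas: "{\<omega> \<in> space M. \<forall>i < length x. X i \<omega> = x ! i} \<in> sets M"
    using assms(2) by measurable
  have "{\<omega> \<in> space M. \<forall>i < length (x@[s]). X i \<omega> = (x@[s]) ! i}
     \<subseteq> {\<omega> \<in> space M. \<forall>i < length x. X i \<omega> = x ! i}"
    by (auto simp: nth_append)
  then show ?thesis unfolding Pr_def using meas by (rule finite_measure_mono)
qed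

lemma cequiv_refl: "cequiv M X x x"
  unfolding cequiv_def by (cases "Pr M X x > 0") (auto simp: less_le Pr_nonneg)

lemma cequiv_sym: "cequiv M X x y \<Longrightarrow> cequiv M X y x"
  unfolding cequiv_def by auto

lemma cequiv_trans: "cequiv M X x y \<Longrightarrow> cequiv M X y z \<Longrightarrow> cequiv M X x z"
  unfolding cequiv_def by auto

lemma cls_eq_iff: "cls M X x = cls M X y \<longleftrightarrow> cequiv M X x y"
  unfolding cls_def using cequiv_refl cequiv_sym cequiv_trans by blast

lemma mem_cls: "y \<in> cls M X x \<longleftrightarrow> cls M X x = cls M X y"
  unfolding cls_eq_iff by (simp add: cls_def)

lemma causal_mem_pos:
  assumes "q \<in> causal_states M X" "y \<in> q" shows "Pr M X y > 0"
proof -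
  obtain x where q: "q = cls M X x" and px: "Pr M X x > 0"
    using assms(1) unfolding causal_states_def by blast
  have "cequiv M X x y" using assms(2) q by (simp add: cls_def)
  then show ?thesis using px unfolding cequiv_def by linarith
qed

lemma self_mem_cls: "y \<in> cls M X y"
  by (simp add: cls_def cequiv_refl)

lemma causal_cls_pos:
  assumes "q \<in> causal_states M X" "cls M X y = q" shows "Pr M X y > 0"
  using causal_mem_pos[OF assms(1), of y] self_mem_cls[of y M X] assms(2) by simp

lemma causal_mem_iff:
  assumes "q \<in> causal_states M X" shows "y \<in> q \<longleftrightarrow> cls M X y = q"
proof -
  obtain x where q: "q = cls M X x"
    using assms(1) unfolding causal_states_def by blast
  show ?thesis unfolding q mem_cls by (rule eq_commute)
qed

lemma sym_deriv_eq:
  assumes "q \<in> causal_states M X" "y \<in> q"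
  shows "sym_deriv M X q s = Pr M X (y @ [s]) / Pr M X y"
proof -
  have "\<exists>x. x \<in> q" using assms by blast
  then have h: "(SOME x. x \<in> q) \<in> q" by (rule someI_ex)
  have "cls M X (SOME x. x \<in> q) = cls M X y"
    using causal_mem_iff[OF assms(1)] h assms(2) by simp
  then have "cequiv M X (SOME x. x \<in> q) y" by (simp add: cls_eq_iff)
  moreover have "Pr M X y > 0" using causal_mem_pos assms by blast
  ultimately have "mu_cyl M X (SOME x. x \<in> q) = mu_cyl M X y"
    unfolding cequiv_def by auto
  then show ?thesis unfolding sym_deriv_def by (simp add: mu_cyl_def)
qed

lemma right_inv:
  assumes "prob_space M" "\<And>t. X t \<in> measurable M (count_space UNIV)"
    and "cequiv M X x y"
  shows "cequiv M X (x @ [s]) (y @ [s])"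
proof (cases "Pr M X x = 0")
  case True
  then have "Pr M X y = 0" using assms(3) unfolding cequiv_def by auto
  have "Pr M X (x@[s]) \<le> Pr M X x" "Pr M X (y@[s]) \<le> Pr M X y"
    using Pr_snoc_le[OF assms(1,2)] by auto
  then have "Pr M X (x@[s]) = 0" "Pr M X (y@[s]) = 0"
    using True \<open>Pr M X y = 0\<close> Pr_nonneg[of M X "x@[s]"] Pr_nonneg[of M X "y@[s]"] by linarith+
  then show ?thesis unfolding cequiv_def by simp
next
  case False
  then have px: "Pr M X x > 0" and py: "Pr M X y > 0" and mu: "mu_cyl M X x = mu_cyl M X y"
    using assms(3) unfolding cequiv_def by auto
  have e1: "Pr M X (x@[s]) / Pr M X x = Pr M X (y@[s]) / Pr M X y"
    using fun_cong[OF mu, of "[s]"] by (simp add: mu_cyl_def)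
  show ?thesis
  proof (cases "Pr M X (x@[s]) = 0")
    case True
    then have "Pr M X (y@[s]) = 0" using e1 py by simp
    with True show ?thesis unfolding cequiv_def by simp
  next
    case False
    then have pxs: "Pr M X (x@[s]) > 0" using Pr_nonneg less_le by metis
    have "Pr M X (y@[s]) / Pr M X y > 0" using e1[symmetric] pxs px by simp
    then have pys: "Pr M X (y@[s]) > 0" using py by (simp add: zero_less_divide_iff)
    have "mu_cyl M X (x@[s]) z = mu_cyl M X (y@[s]) z" for z
    proof -
      have e2: "Pr M X (x@(s#z)) / Pr M X x = Pr M X (y@(s#z)) / Pr M X y"
        using fun_cong[OF mu, of "s#z"] by (simp add: mu_cyl_def)
      have "mu_cyl M X (x@[s]) z = (Pr M X (x@(s#z)) / Pr M X x) / (Pr M X (x@[s]) / Pr M X x)"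
        using px by (simp add: mu_cyl_def)
      also have "\<dots> = (Pr M X (y@(s#z)) / Pr M X y) / (Pr M X (y@[s]) / Pr M X y)"
        using e1 e2 by simp
      also have "\<dots> = mu_cyl M X (y@[s]) z"
        using py by (simp add: mu_cyl_def)
      finally show ?thesis .
    qed
    then show ?thesis unfolding cequiv_def using pxs pys by auto
  qed
qed

lemma next_state_iff:
  assumes "prob_space M" "\<And>t. X t \<in> measurable M (count_space UNIV)"
    and "q \<in> causal_states M X" "y \<in> q"
  shows "next_state M X q s q' \<longleftrightarrow> cls M X (y @ [s]) = q'"
proof
  assume "next_state M X q s q'" then show "cls M X (y @ [s]) = q'"
    using assms(4) unfolding next_state_def by auto
next
  assume a: "cls M X (y @ [s]) = q'"
  show "next_state M X q s q'" unfolding next_state_def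
  proof
    fix x assume "x \<in> q"
    then have "cls M X x = cls M X y" using causal_mem_iff[OF assms(3)] assms(4) by simp
    then have "cequiv M X x y" by (simp add: cls_eq_iff)
    then have "cequiv M X (x@[s]) (y@[s])" by (rule right_inv[OF assms(1,2)])
    then have "cls M X (x @ [s]) = cls M X (y @ [s])" by (simp only: cls_eq_iff)
    then show "cls M X (x @ [s]) = q'" using a by simp
  qed
qed

lemma finite_len: "finite {y :: 'a::finite list. length y = n}"
  using finite_lists_length_eq[of "UNIV :: 'a set" n] by simp

lemma S_sub: "cls M X ` {y. length y = n \<and> Pr M X y > 0} \<subseteq> causal_states M X"
  unfolding causal_states_def by blast

lemma pd_zero:
  fixes X :: "nat \<Rightarrow> 'w \<Rightarrow> 'a::finite"
  assumes "q \<in> causal_states M X" "q \<notin> cls M X ` {y. length y = n \<and> Pr M X y > 0}"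
  shows "pd M X n q = 0"
proof -
  have h: "{y. length y = n \<and> cls M X y = q} = {}"
    using assms causal_cls_pos[OF assms(1)] by blast
  show ?thesis unfolding pd_def h by simp
qed

lemma tp_mult:
  fixes X :: "nat \<Rightarrow> 'w \<Rightarrow> 'a::finite"
  assumes "prob_space M" "\<And>t. X t \<in> measurable M (count_space UNIV)"
    and "q \<in> causal_states M X" "cls M X y = q"
  shows "trans_prob M X q q' * Pr M X y = (\<Sum>\<sigma>\<in>{\<sigma>. cls M X (y @ [\<sigma>]) = q'}. Pr M X (y @ [\<sigma>]))"
proof -
  have yq: "y \<in> q" using causal_mem_iff[OF assms(3)] assms(4) by simp
  have py: "Pr M X y > 0" using causal_cls_pos[OF assms(3,4)] .
  have "trans_prob M X q q' * Pr M X y = (\<Sum>\<sigma>\<in>{\<sigma>. next_state M X q \<sigma> q'}. sym_deriv M X q \<sigma> * Pr M X y)"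
    unfolding trans_prob_def by (simp add: sum_distrib_right)
  also have "{\<sigma>. next_state M X q \<sigma> q'} = {\<sigma>. cls M X (y @ [\<sigma>]) = q'}"
    using next_state_iff[OF assms(1,2,3) yq] by blast
  also have "(\<Sum>\<sigma>\<in>{\<sigma>. cls M X (y @ [\<sigma>]) = q'}. sym_deriv M X q \<sigma> * Pr M X y)
     = (\<Sum>\<sigma>\<in>{\<sigma>. cls M X (y @ [\<sigma>]) = q'}. Pr M X (y @ [\<sigma>]))"
    using sym_deriv_eq[OF assms(3) yq] py by simp
  finally show ?thesis .
qed

lemma pd_step:
  fixes X :: "nat \<Rightarrow> 'w \<Rightarrow> 'a::finite"
  assumes "prob_space M" "\<And>t. X t \<in> measurable M (count_space UNIV)"
    and "q' \<in> causal_states M X"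
  shows "pd M X (Suc n) q' = (\<Sum>q\<in>cls M X ` {y. length y = n \<and> Pr M X y > 0}. trans_prob M X q q' * pd M X n q)"
proof -
  define Yp where "Yp = {y :: 'a list. length y = n \<and> Pr M X y > 0}"
  define G where "G y = (\<Sum>\<sigma>\<in>{\<sigma>. cls M X (y @ [\<sigma>]) = q'}. Pr M X (y @ [\<sigma>]))" for y
  have fYp: "finite Yp" unfolding Yp_def by (rule finite_subset[OF _ finite_len[of n]]) auto
  have "(\<Sum>q\<in>cls M X ` Yp. trans_prob M X q q' * pd M X n q)
      = (\<Sum>q\<in>cls M X ` Yp. \<Sum>y\<in>{y\<in>Yp. cls M X y = q}. G y)"
  proof (rule sum.cong[OF refl])
    fix q assume q: "q \<in> cls M X ` Yp"
    then have qC: "q \<in> causal_states M X" using S_sub unfolding Yp_def by blast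
    have "{y. length y = n \<and> cls M X y = q} = {y\<in>Yp. cls M X y = q}"
      unfolding Yp_def using causal_cls_pos[OF qC] by blast
    then have "trans_prob M X q q' * pd M X n q = (\<Sum>y\<in>{y\<in>Yp. cls M X y = q}. trans_prob M X q q' * Pr M X y)"
      unfolding pd_def by (simp add: sum_distrib_left)
    also have "\<dots> = (\<Sum>y\<in>{y\<in>Yp. cls M X y = q}. G y)"
      unfolding G_def by (rule sum.cong[OF refl]) (rule tp_mult[OF assms(1,2) qC], simp)
    finally show "trans_prob M X q q' * pd M X n q = (\<Sum>y\<in>{y\<in>Yp. cls M X y = q}. G y)" .
  qed
  also have "\<dots> = (\<Sum>y\<in>Yp. G y)"
    by (rule sum.group[OF fYp]) (use fYp in auto)
  also have "\<dots> = (\<Sum>y\<in>{y. length y = n}. G y)"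
  proof (rule sum.mono_neutral_left[OF finite_len])
    show "Yp \<subseteq> {y. length y = n}" unfolding Yp_def by auto
    show "\<forall>i\<in>{y. length y = n} - Yp. G i = 0"
    proof
      fix y assume "y \<in> {y. length y = n} - Yp"
      then have "Pr M X y \<le> 0" unfolding Yp_def by auto
      have "{\<sigma>. cls M X (y @ [\<sigma>]) = q'} = {}"
      proof (rule ccontr)
        assume "{\<sigma>. cls M X (y @ [\<sigma>]) = q'} \<noteq> {}"
        then obtain s where "cls M X (y @ [s]) = q'" by blast
        then have "Pr M X (y @ [s]) > 0" by (rule causal_cls_pos[OF assms(3)])
        moreover have "Pr M X (y @ [s]) \<le> Pr M X y" by (rule Pr_snoc_le[OF assms(1,2)])
        ultimately show False using \<open>Pr M X y \<le> 0\<close> by linarith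
      qed
      then show "G y = 0" unfolding G_def by simp
    qed
  qed
  also have "\<dots> = (\<Sum>(y,\<sigma>)\<in>(SIGMA y:{y. length y = n}. {\<sigma>. cls M X (y @ [\<sigma>]) = q'}). Pr M X (y @ [\<sigma>]))"
    unfolding G_def by (rule sum.Sigma[OF finite_len]) auto
  also have "\<dots> = (\<Sum>x\<in>(\<lambda>(y,\<sigma>). y @ [\<sigma>]) ` (SIGMA y:{y. length y = n}. {\<sigma>. cls M X (y @ [\<sigma>]) = q'}). Pr M X x)"
    by (subst sum.reindex) (auto simp: inj_on_def case_prod_beta)
  also have "(\<lambda>(y,\<sigma>). y @ [\<sigma>]) ` (SIGMA y:{y. length y = n}. {\<sigma>. cls M X (y @ [\<sigma>]) = q'})
      = {x. length x = Suc n \<and> cls M X x = q'}"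
  proof (rule set_eqI, rule iffI)
    fix x assume "x \<in> {x. length x = Suc n \<and> cls M X x = q'}"
    then have "length x = Suc n" "cls M X x = q'" by auto
    then have "x = butlast x @ [last x]" "x \<noteq> []" by (auto intro: append_butlast_last_id[symmetric])
    then show "x \<in> (\<lambda>(y,\<sigma>). y @ [\<sigma>]) ` (SIGMA y:{y. length y = n}. {\<sigma>. cls M X (y @ [\<sigma>]) = q'})"
      using \<open>length x = Suc n\<close> \<open>cls M X x = q'\<close>
      by (intro image_eqI[of _ _ "(butlast x, last x)"]) auto
  qed auto
  finally show ?thesis unfolding Yp_def pd_def by simp
qed

lemma tp_nonneg:
  assumes "q \<in> causal_states M X" shows "trans_prob M X q q' \<ge> 0"
  unfolding trans_prob_def sym_deriv_def mu_cyl_def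
  by (rule sum_nonneg) (simp add: Pr_nonneg)

lemma pd_nonneg: "pd M X d q \<ge> 0"
  unfolding pd_def by (rule sum_nonneg) (simp add: Pr_nonneg)

lemma pd_ge:
  fixes X :: "nat \<Rightarrow> 'w \<Rightarrow> 'a::finite"
  assumes "prob_space M" "\<And>t. X t \<in> measurable M (count_space UNIV)"
    and "q \<in> causal_states M X" "q' \<in> causal_states M X"
  shows "trans_prob M X q q' * pd M X n q \<le> pd M X (Suc n) q'"
proof (cases "q \<in> cls M X ` {y. length y = n \<and> Pr M X y > 0}")
  case True
  have fin: "finite (cls M X ` {y :: 'a list. length y = n \<and> Pr M X y > 0})"
    by (rule finite_imageI, rule finite_subset[OF _ finite_len[of n]]) auto
  show ?thesis unfolding pd_step[OF assms(1,2,4)]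
  proof (rule member_le_sum[OF True _ fin])
    fix x assume "x \<in> cls M X ` {y. length y = n \<and> Pr M X y > 0} - {q}"
    then have "x \<in> causal_states M X" using S_sub by blast
    then show "0 \<le> trans_prob M X x q' * pd M X n x"
      using tp_nonneg pd_nonneg by (intro mult_nonneg_nonneg)
  qed
next
  case False
  then have "pd M X n q = 0" by (rule pd_zero[OF assms(3)])
  then show ?thesis using pd_nonneg by simp
qed

theorem mainTheorem2:
  fixes M :: "'w measure" and X :: "nat \<Rightarrow> 'w \<Rightarrow> 'a::finite"
  assumes "stationary_ergodic M X"
  shows "(\<forall>q' \<in> causal_states M X. \<forall>d::nat. d > 0 \<longrightarrow>
            pd M X d q' = (\<Sum>\<^sub>\<infinity>q \<in> causal_states M X. trans_prob M X q q' * pd M X (d - 1) q))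
       \<and> (\<forall>q \<in> causal_states M X. \<forall>q' \<in> causal_states M X.
            persistent M X q \<and> transient M X q' \<longrightarrow> trans_prob M X q q' = 0)"
proof -
  have ps: "prob_space M" and ms: "\<And>t. X t \<in> measurable M (count_space UNIV)"
    using assms unfolding stationary_ergodic_def by auto
  have part1: "pd M X d q' = (\<Sum>\<^sub>\<infinity>q \<in> causal_states M X. trans_prob M X q q' * pd M X (d - 1) q)"
    if q': "q' \<in> causal_states M X" and d: "d > 0" for q' d
  proof -
    obtain n where dn: "d = Suc n" using d by (cases d) auto
    let ?S = "cls M X ` {y :: 'a list. length y = n \<and> Pr M X y > 0}"
    have fin: "finite ?S"
      by (rule finite_imageI, rule finite_subset[OF _ finite_len[of n]]) auto
    have "(\<Sum>\<^sub>\<infinity>q \<in> causal_states M X. trans_prob M X q q' * pd M X n q)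
        = (\<Sum>\<^sub>\<infinity>q \<in> ?S. trans_prob M X q q' * pd M X n q)"
    proof (rule infsum_cong_neutral)
      fix x assume "x \<in> ?S - causal_states M X"
      then show "trans_prob M X x q' * pd M X n x = 0" using S_sub by blast
    next
      fix x assume "x \<in> causal_states M X - ?S"
      then have "pd M X n x = 0" using pd_zero by blast
      then show "trans_prob M X x q' * pd M X n x = 0" by simp
    qed simp
    also have "\<dots> = pd M X (Suc n) q'"
      using fin pd_step[OF ps ms q'] by simp
    finally show ?thesis using dn by simp
  qed
  have part2: "trans_prob M X q q' = 0"
    if q: "q \<in> causal_states M X" and q': "q' \<in> causal_states M X"
      and pt: "persistent M X q" "transient M X q'" for q q'
  proof (rule ccontr)
    assume "trans_prob M X q q' \<noteq> 0"
    then have t: "trans_prob M X q q' > 0" using tp_nonneg[OF q, of q'] by linarith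
    have "0 < liminf (\<lambda>d. ereal (pd M X d q))" using pt(1) unfolding persistent_def .
    then obtain c where c0: "0 < ereal c" and cl: "ereal c < liminf (\<lambda>d. ereal (pd M X d q))"
      using ereal_dense2 by blast
    have ev: "eventually (\<lambda>d. ereal c < ereal (pd M X d q)) sequentially"
      using less_LiminfD[OF cl] .
    have ev2: "eventually (\<lambda>d. ereal (trans_prob M X q q' * c) \<le> ereal (pd M X d q')) sequentially"
    proof -
      from ev obtain N where N: "\<And>d. d \<ge> N \<Longrightarrow> c < pd M X d q"
        unfolding eventually_sequentially by auto
      have "ereal (trans_prob M X q q' * c) \<le> ereal (pd M X d q')" if "d \<ge> Suc N" for d
      proof -
        obtain n where dn: "d = Suc n" "n \<ge> N" using \<open>d \<ge> Suc N\<close> by (cases d) auto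
        have "trans_prob M X q q' * c \<le> trans_prob M X q q' * pd M X n q"
          using N[OF dn(2)] t by simp
        also have "\<dots> \<le> pd M X d q'" using pd_ge[OF ps ms q q'] dn by simp
        finally show ?thesis by simp
      qed
      then show ?thesis unfolding eventually_sequentially by blast
    qed
    have "ereal (trans_prob M X q q' * c) \<le> liminf (\<lambda>d. ereal (pd M X d q'))"
      using ev2 by (rule Liminf_bounded)
    moreover have "0 < ereal (trans_prob M X q q' * c)" using t c0 by simp
    ultimately have "0 < liminf (\<lambda>d. ereal (pd M X d q'))" by (rule order.strict_trans2[rotated])
    then show False using pt(2) unfolding transient_def persistent_def by simp
  qed
  show ?thesis using part1 part2 by blast
qed

end
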